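(* Let $n\ge1$, $s\in\{1,\dots,n\}$, let $C\in\mathbb{R}^{n\times n}$ be symmetric positive definite, and let $x\in[0,1]^n$ with $\sum_{i=1}^n x_i=s$. Let $0\le t_1\le t_2\le\lambda_{\min}(C)$, and let $\nu^{t_1}$ and $\mu^{t_2}$ be the vectors of eigenvalues of $M_{t_1}(x)$ and $M_{t_2}(x)$, respectively, sorted in nonincreasing order. Then: (i) $\mu^{t_2}+t_2\mathbb{I}_s\succ\nu^{t_1}+t_1\mathbb{I}_s$; (ii) $\sum_{i=1}^{\ell}\mu^{t_2}_i+(t_2-t_1)\sum_{i=1}^{\ell}x^\downarrow_i\ge\sum_{i=1}^{\ell}\nu^{t_1}_i$ for each $\ell\in\{1,\dots,s\}$; (iii) $\mu^{t_2}_i+t_2-t_1\ge\nu^{t_1}_i$ for each $i\in\{1,\dots,s\}$.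
   Context: $\lambda_{\min}(C)$ is the smallest eigenvalue of $C$. For $0\le t\le\lambda_{\min}(C)$ let $A(t)\in\mathbb{R}^{n\times n}$ be a Cholesky factor of $C-tI$ (so $C-tI=A(t)^\top A(t)$), with $i$-th column $a_i(t)$, and $M_t(x)=\sum_i x_i a_i(t)a_i(t)^\top$. $\mathbb{I}_s\in\mathbb{R}^n$ has first $s$ entries $1$ and the rest $0$. For a vector $y$, $y^\downarrow_i$ denotes its $i$-th largest entry. For $\mu,\nu\in\mathbb{R}^n$, $\mu\succ\nu$ ($\mu$ majorizes $\nu$) means $\sum_{i=1}^\ell\mu^\downarrow_i\ge\sum_{i=1}^\ell\nu^\downarrow_i$ for all $\ell\in\{1,\dots,n-1\}$ and $\sum_{i=1}^n\mu_i=\sum_{i=1}^n\nu_i$. *)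

theory Defs
  imports "Jordan_Normal_Form.Matrix" "Jordan_Normal_Form.Char_Poly"
begin

definition sym_pos_def_mat :: "nat \<Rightarrow> real mat \<Rightarrow> bool" where
  "sym_pos_def_mat n C \<longleftrightarrow> C \<in> carrier_mat n n \<and> transpose_mat C = C \<and>
     (\<forall>v \<in> carrier_vec n. v \<noteq> 0\<^sub>v n \<longrightarrow> v \<bullet> (C *\<^sub>v v) > 0)"

definition lambda_min :: "real mat \<Rightarrow> real" where
  "lambda_min C = Min {k. eigenvalue C k}"

definition cholesky_factor :: "nat \<Rightarrow> real mat \<Rightarrow> real mat \<Rightarrow> bool" where
  "cholesky_factor n A B \<longleftrightarrow> A \<in> carrier_mat n n \<and> upper_triangular A \<and>
     (\<forall>i<n. A $$ (i,i) \<ge> 0) \<and> B = transpose_mat A * A"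

definition outer :: "real vec \<Rightarrow> real mat" where
  "outer a = mat (dim_vec a) (dim_vec a) (\<lambda>(j,k). a $ j * a $ k)"

definition M_mat :: "nat \<Rightarrow> real mat \<Rightarrow> real vec \<Rightarrow> real mat" where
  "M_mat n A x = mat n n (\<lambda>(j,k). \<Sum>i<n. x $ i * (outer (col A i)) $$ (j,k))"

definition sorted_eigvals :: "real mat \<Rightarrow> real list \<Rightarrow> bool" where
  "sorted_eigvals B ev \<longleftrightarrow> length ev = dim_row B \<and> sorted_wrt (\<ge>) ev \<and>
     char_poly B = (\<Prod>a\<leftarrow>ev. [:- a, 1:])"

(* y\<down>: entries sorted nonincreasingly (so y\<down>_i = desc y ! (i-1)) *)
definition desc :: "real list \<Rightarrow> real list" where
  "desc y = rev (sort y)"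

definition ind_vec :: "nat \<Rightarrow> nat \<Rightarrow> real list" where
  "ind_vec n s = map (\<lambda>i. if i < s then 1 else 0) [0..<n]"

definition majorizes :: "real list \<Rightarrow> real list \<Rightarrow> bool" where
  "majorizes mu nu \<longleftrightarrow> length mu = length nu \<and>
     (\<forall>l \<in> {1..<length mu}. sum_list (take l (desc mu)) \<ge> sum_list (take l (desc nu))) \<and>
     sum_list mu = sum_list nu"

end

theory Submission
  imports Defs "Jordan_Normal_Form.Schur_Decomposition"
begin


lemma char_poly_alt:
  fixes A :: "'a::field mat"
  assumes A: "A \<in> carrier_mat n n"
  shows "char_poly A = det ([:0,1:] \<cdot>\<^sub>m 1\<^sub>m n - map_mat (\<lambda>a. [:a:]) A)"
  unfolding char_poly_defs using A by (intro arg_cong[of _ _ det] eq_matI) auto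

lemma char_poly_comm:
  fixes P Q :: "'a::field mat"
  assumes P: "P \<in> carrier_mat n n" and Q: "Q \<in> carrier_mat n n"
  shows "char_poly (P * Q) = char_poly (Q * P)"
proof -
  let ?P = "map_mat (\<lambda>a. [:a:]) P"
  let ?Q = "map_mat (\<lambda>a. [:a:]) Q"
  let ?X = "[:0,1:] \<cdot>\<^sub>m 1\<^sub>m n :: 'a poly mat"
  let ?I = "1\<^sub>m n :: 'a poly mat"
  let ?Z = "0\<^sub>m n n :: 'a poly mat"
  have cP: "?P \<in> carrier_mat n n" and cQ: "?Q \<in> carrier_mat n n" and cX: "?X \<in> carrier_mat n n"
    using P Q by auto
  have e1: "char_poly (P * Q) = det (?X - ?P * ?Q)"
    using char_poly_alt[of "P*Q" n] P Q map_poly_mult(1)[OF P Q] by auto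
  have e2: "char_poly (Q * P) = det (?X - ?Q * ?P)"
    using char_poly_alt[of "Q*P" n] P Q map_poly_mult(1)[OF Q P] by auto
  have d1: "det (four_block_mat ?X ?P ?Q ?I) = det (?X - ?P * ?Q)"
    using det_four_block_mat[OF cX cP cQ one_carrier_mat] cQ by simp
  have blk1: "?I * ?X + ?Z * ?Q = ?X" using cX cQ by simp
  have blk2: "?I * ?P + ?Z * ?I = ?P" using cP by simp
  have blk3: "(- ?Q) * ?X + ?X * ?Q = ?Z"
    apply (rule eq_matI) using cQ cX by (auto simp: scalar_prod_def if_distrib[where f="Polynomial.smult _"] if_distrib[where f="pCons 0"] cong: if_cong)
  have blk4: "(- ?Q) * ?P + ?X * ?I = ?X - ?Q * ?P"
    apply (rule eq_matI) using cQ cX cP by (auto simp: scalar_prod_def)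
  have prod: "four_block_mat ?I ?Z (- ?Q) ?X * four_block_mat ?X ?P ?Q ?I
     = four_block_mat ?X ?P ?Z (?X - ?Q * ?P)"
    apply (subst mult_four_block_mat[OF one_carrier_mat zero_carrier_mat uminus_carrier_mat[OF cQ] cX
         cX cP cQ one_carrier_mat])
    by (simp only: blk1 blk2 blk3 blk4)
  have c4: "four_block_mat ?X ?P ?Q ?I \<in> carrier_mat (n+n) (n+n)" using cP cQ cX by auto
  have c5: "four_block_mat ?I ?Z (- ?Q) ?X \<in> carrier_mat (n+n) (n+n)" using cP cQ cX by auto
  have "det (four_block_mat ?I ?Z (- ?Q) ?X) * det (four_block_mat ?X ?P ?Q ?I)
     = det (four_block_mat ?X ?P ?Z (?X - ?Q * ?P))"
    using det_mult[OF c5 c4] prod by simp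
  moreover have "det (four_block_mat ?I ?Z (- ?Q) ?X) = det ?X"
    using det_four_block_mat_upper_right_zero[OF one_carrier_mat refl _ cX, of "- ?Q"] cQ by simp
  moreover have "det (four_block_mat ?X ?P ?Z (?X - ?Q * ?P)) = det ?X * det (?X - ?Q * ?P)"
  proof -
    have "?X - ?Q * ?P \<in> carrier_mat n n" using cX cQ cP by auto
    from det_four_block_mat_lower_left_zero[OF cX cP refl this] show ?thesis .
  qed
  moreover have "det ?X \<noteq> 0"
    using det_smult[of "[:0,1:]" "1\<^sub>m n :: 'a poly mat"] by simp
  ultimately show ?thesis using e1 e2 d1 by simp
qed


lemma orth_completion:
  fixes v :: "real vec"
  assumes v: "v \<in> carrier_vec n" and v0: "v \<noteq> 0\<^sub>v n"
  shows "\<exists>W \<in> carrier_mat n n. transpose_mat W * W = 1\<^sub>m n \<and> col W 0 = (1 / sqrt (v \<bullet> v)) \<cdot>\<^sub>v v"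
proof -
  interpret cof_vec_space n "TYPE(real)" .
  define b where "b = basis_completion v"
  define ws where "ws = gram_schmidt n b"
  from basis_completion[OF v v0, folded b_def]
  have span_b: "span (set b) = carrier_vec n" and dist_b: "distinct b"
    and indep: "\<not> lin_dep (set b)" and b: "set b \<subseteq> carrier_vec n" and hdb: "hd b = v"
    and len_b: "length b = n" by auto
  have n: "n \<noteq> 0" using v v0 by (auto intro!: eq_vecI)
  from hdb len_b n obtain vs where bv: "b = v # vs" by (cases b, auto)
  from gram_schmidt_result[OF b dist_b indep refl, folded ws_def]
  have ws: "set ws \<subseteq> carrier_vec n" "corthogonal ws" "length ws = n"
    by (auto simp: len_b)
  from gram_schmidt_hd[OF v, of vs, folded bv] have hdws: "hd ws = v" unfolding ws_def .
  define ws' where "ws' = map (\<lambda>w. (1 / sqrt (w \<bullet> w)) \<cdot>\<^sub>v w) ws"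
  define W where "W = mat_of_cols n ws'"
  have len': "length ws' = n" using ws unfolding ws'_def by auto
  have wsc: "\<And>i. i < n \<Longrightarrow> ws ! i \<in> carrier_vec n" using ws by auto
  have wsc': "\<And>i. i < n \<Longrightarrow> ws' ! i \<in> carrier_vec n" using wsc ws unfolding ws'_def by auto
  have orth: "\<And>i j. i < n \<Longrightarrow> j < n \<Longrightarrow> ws ! i \<bullet> ws ! j = 0 \<longleftrightarrow> i \<noteq> j"
    using ws(2,3) unfolding corthogonal_def by auto
  have pos: "\<And>i. i < n \<Longrightarrow> ws ! i \<bullet> ws ! i > 0"
  proof -
    fix i assume i: "i < n"
    have "ws ! i \<bullet> ws ! i \<ge> 0" unfolding scalar_prod_def by (auto intro: sum_nonneg)
    with orth[OF i i] show "ws ! i \<bullet> ws ! i > 0" by auto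
  qed
  have Wc: "W \<in> carrier_mat n n" unfolding W_def using len' by (metis mat_of_cols_carrier(1))
  have colW: "\<And>i. i < n \<Longrightarrow> col W i = ws' ! i" unfolding W_def using len' wsc' by simp
  have "transpose_mat W * W = 1\<^sub>m n"
  proof (rule eq_matI)
    fix i j assume i: "i < dim_row (1\<^sub>m n)" and j: "j < dim_col (1\<^sub>m n)"
    hence i: "i < n" and j: "j < n" by auto
    have "(transpose_mat W * W) $$ (i, j) = ws' ! i \<bullet> ws' ! j"
      using i j Wc colW by simp
    also have "\<dots> = (1 / sqrt (ws ! i \<bullet> ws ! i)) * (1 / sqrt (ws ! j \<bullet> ws ! j)) * (ws ! i \<bullet> ws ! j)"
      unfolding ws'_def using i j ws(3) wsc[OF i] wsc[OF j] by simp
    also have "\<dots> = 1\<^sub>m n $$ (i, j)"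
    proof (cases "i = j")
      case True
      with pos[OF i] show ?thesis using i by (simp add: real_sqrt_mult[symmetric])
    next
      case False
      with orth[OF i j] show ?thesis using i j by simp
    qed
    finally show "(transpose_mat W * W) $$ (i, j) = 1\<^sub>m n $$ (i, j)" .
  qed (insert Wc, auto)
  moreover have "col W 0 = (1 / sqrt (v \<bullet> v)) \<cdot>\<^sub>v v"
    using colW[of 0] n hdws ws(3) unfolding ws'_def by (cases ws, auto)
  ultimately show ?thesis using Wc by blast
qed

definition diag_of :: "nat \<Rightarrow> real list \<Rightarrow> real mat" where
  "diag_of n es = mat n n (\<lambda>(i,j). if i = j then es ! i else 0)"

lemma length_es:
  fixes B :: "'a::field mat"
  assumes B: "B \<in> carrier_mat n n" and cp: "char_poly B = (\<Prod>a\<leftarrow>es. [:-a,1:])"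
  shows "length es = n"
proof -
  have "degree (\<Prod>a\<leftarrow>es. [:-a,1::'a:]) = length es"
    by (subst degree_prod_list_eq) (auto simp: o_def sum_list_triv)
  with degree_monic_char_poly[OF B] cp show ?thesis by simp
qed

lemma spectral:
  fixes B :: "real mat"
  assumes "B \<in> carrier_mat n n" "transpose_mat B = B" "char_poly B = (\<Prod>a\<leftarrow>es. [:-a,1:])"
  shows "\<exists>U \<in> carrier_mat n n. transpose_mat U * U = 1\<^sub>m n \<and> transpose_mat U * B * U = diag_of n es"
  using assms
proof (induct es arbitrary: n B)
  case Nil
  then have "n = 0" using length_es[of B n "[]"] by simp
  then show ?case using Nil by (intro bexI[of _ "1\<^sub>m 0"]) (auto intro!: eq_matI simp: diag_of_def)
next
  case (Cons e es n B)
  note B = Cons(2) and symB = Cons(3) and cp = Cons(4)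
  have len: "length (e # es) = n" using length_es[OF B cp] .
  then obtain m where nm: "n = Suc m" by (cases n) auto
  have ev: "eigenvalue B e" unfolding eigenvalue_root_char_poly[OF B] cp by simp
  define v where "v = find_eigenvector B e"
  from find_eigenvector[OF B ev] have "eigenvector B v e" unfolding v_def .
  hence v: "v \<in> carrier_vec n" and v0: "v \<noteq> 0\<^sub>v n" and Bv: "B *\<^sub>v v = e \<cdot>\<^sub>v v"
    unfolding eigenvector_def using B by auto
  from orth_completion[OF v v0] obtain W where W: "W \<in> carrier_mat n n"
    and WTW: "transpose_mat W * W = 1\<^sub>m n" and colW0: "col W 0 = (1 / sqrt (v \<bullet> v)) \<cdot>\<^sub>v v" by blast
  have WT: "transpose_mat W \<in> carrier_mat n n" using W by auto
  have WWT: "W * transpose_mat W = 1\<^sub>m n" using mat_mult_left_right_inverse[OF WT W WTW] .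
  have Bw0: "B *\<^sub>v col W 0 = e \<cdot>\<^sub>v col W 0"
    unfolding colW0 using mult_mat_vec[OF B v] Bv by (simp add: smult_smult_assoc mult.commute)
  define A' where "A' = transpose_mat W * B * W"
  have A'c: "A' \<in> carrier_mat n n" unfolding A'_def using W B by auto
  have A'sym: "transpose_mat A' = A'"
    unfolding A'_def using W B symB
    by (simp add: transpose_mult[of _ n n _ n] assoc_mult_mat[of _ n n _ n _ n])
  have A'col: "\<And>i. i < n \<Longrightarrow> A' $$ (i, 0) = (if i = 0 then e else 0)"
  proof -
    fix i assume i: "i < n"
    have A'eq: "A' = transpose_mat W * (B * W)" unfolding A'_def using W B by (simp add: assoc_mult_mat[of _ n n _ n _ n])
    have cBW: "col (B * W) 0 = B *\<^sub>v col W 0" using col_mult2[OF B W, of 0] nm by simp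
    have "A' $$ (i, 0) = col W i \<bullet> col (B * W) 0" unfolding A'eq using i W B nm by simp
    hence "A' $$ (i, 0) = col W i \<bullet> (B *\<^sub>v col W 0)" unfolding cBW .
    also have "\<dots> = e * (col W i \<bullet> col W 0)" unfolding Bw0 using W i by simp
    also have "col W i \<bullet> col W 0 = (transpose_mat W * W) $$ (i, 0)" using W i nm by simp
    finally show "A' $$ (i, 0) = (if i = 0 then e else 0)" unfolding WTW using i nm by simp
  qed
  have A'row: "\<And>j. j < n \<Longrightarrow> A' $$ (0, j) = (if j = 0 then e else 0)"
  proof -
    fix j assume j: "j < n"
    have "A' $$ (0, j) = transpose_mat A' $$ (j, 0)" using A'c j nm by simp
    thus "A' $$ (0, j) = (if j = 0 then e else 0)" using A'sym A'col[OF j] by simp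
  qed
  define A3 where "A3 = mat m m (\<lambda>(i,j). A' $$ (Suc i, Suc j))"
  define E where "E = mat 1 1 (\<lambda>_. e)"
  have A3c: "A3 \<in> carrier_mat m m" unfolding A3_def by simp
  have Ec: "E \<in> carrier_mat 1 1" unfolding E_def by simp
  have A'blk: "A' = four_block_mat E (0\<^sub>m 1 m) (0\<^sub>m m 1) A3"
    apply (rule eq_matI)
    using A'c A'col A'row nm unfolding A3_def E_def by (auto simp: Suc_pred)
  have A3sym: "transpose_mat A3 = A3"
  proof (rule eq_matI)
    fix i j assume "i < dim_row A3" "j < dim_col A3"
    hence i: "i < m" and j: "j < m" using A3c by auto
    have "A' $$ (Suc j, Suc i) = transpose_mat A' $$ (Suc i, Suc j)" using A'c i j nm by simp
    then show "transpose_mat A3 $$ (i, j) = A3 $$ (i, j)" using A'sym i j unfolding A3_def by simp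
  qed (insert A3c, auto)
  have sim: "similar_mat A' B"
    unfolding similar_mat_def
    by (rule exI[of _ "transpose_mat W"], rule exI[of _ W],
        rule similar_mat_witI[of _ _ n], insert WTW WWT A'c B W WT, auto simp: A'_def)
  have "char_poly B = char_poly A'" using char_poly_similar[OF sim] by simp
  also have "\<dots> = char_poly E * char_poly A3"
    unfolding A'blk by (rule char_poly_four_block_zeros_col[OF Ec _ A3c], simp)
  also have "char_poly E = [:-e, 1:]"
    by (simp add: E_def char_poly_defs det_def sign_def)
  finally have "[:-e,1:] * (\<Prod>a\<leftarrow>es. [:-a,1:]) = [:-e,1:] * char_poly A3" using cp by simp
  hence cp3: "char_poly A3 = (\<Prod>a\<leftarrow>es. [:-a,1:])"
    by (metis mult_cancel_left pCons_eq_0_iff zero_neq_one)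
  from Cons(1)[OF A3c A3sym cp3] obtain U3 where U3: "U3 \<in> carrier_mat m m"
    and U3o: "transpose_mat U3 * U3 = 1\<^sub>m m" and U3d: "transpose_mat U3 * A3 * U3 = diag_of m es" by blast
  define V where "V = four_block_mat (1\<^sub>m 1) (0\<^sub>m 1 m) (0\<^sub>m m 1) U3"
  have Vc: "V \<in> carrier_mat n n" unfolding V_def using U3 nm by auto
  have VT: "transpose_mat V = four_block_mat (1\<^sub>m 1) (0\<^sub>m 1 m) (0\<^sub>m m 1) (transpose_mat U3)"
    unfolding V_def using U3 by (subst transpose_four_block_mat) auto
  have VTc: "transpose_mat V \<in> carrier_mat n n" using Vc by auto
  have VTV: "transpose_mat V * V = 1\<^sub>m n"
    unfolding VT unfolding V_def using U3 U3o nm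
    by (subst mult_four_block_mat[of _ 1 1 _ m _ m _ _ 1 _ m], auto)
  have VTA'V: "transpose_mat V * A' * V = diag_of n (e # es)"
  proof -
    have "transpose_mat V * A' = four_block_mat E (0\<^sub>m 1 m) (0\<^sub>m m 1) (transpose_mat U3 * A3)"
      unfolding VT unfolding A'blk using U3 A3c Ec
      by (subst mult_four_block_mat[of _ 1 1 _ m _ m _ _ 1 _ m], auto)
    also have "\<dots> * V = four_block_mat E (0\<^sub>m 1 m) (0\<^sub>m m 1) (transpose_mat U3 * A3 * U3)"
      unfolding V_def using U3 A3c Ec
      by (subst mult_four_block_mat[of _ 1 1 _ m _ m _ _ 1 _ m], auto)
    also have "\<dots> = diag_of n (e # es)"
      unfolding U3d using nm by (intro eq_matI) (auto simp: E_def diag_of_def)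
    finally show ?thesis .
  qed
  define U where "U = W * V"
  have Uc: "U \<in> carrier_mat n n" unfolding U_def using W Vc by auto
  have UT: "transpose_mat U = transpose_mat V * transpose_mat W"
    unfolding U_def using transpose_mult[OF W Vc] .
  have "transpose_mat U * U = transpose_mat V * (transpose_mat W * W) * V"
    unfolding UT unfolding U_def using W Vc VTc WT
    by (simp add: assoc_mult_mat[of _ n n _ n _ n])
  also have "\<dots> = 1\<^sub>m n" unfolding WTW using VTV Vc VTc by simp
  finally have UTU: "transpose_mat U * U = 1\<^sub>m n" .
  have "transpose_mat U * B * U = transpose_mat V * A' * V"
    unfolding UT unfolding U_def A'_def using W Vc VTc WT B
    by (simp add: assoc_mult_mat[of _ n n _ n _ n])
  with VTA'V UTU Uc show ?case by auto
qed



lemma QF: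
  fixes b w :: "nat \<Rightarrow> nat \<Rightarrow> real" and f y :: "nat \<Rightarrow> real"
  assumes "\<forall>i<n. \<forall>j<n. b i j = (\<Sum>k<n. w i k * f k * w j k)"
  shows "(\<Sum>i<n. \<Sum>j<n. y i * b i j * y j) = (\<Sum>k<n. f k * (\<Sum>i<n. w i k * y i)\<^sup>2)"
proof -
  have "(\<Sum>i<n. \<Sum>j<n. y i * b i j * y j) = (\<Sum>i<n. \<Sum>j<n. \<Sum>k<n. y i * (w i k * f k * w j k) * y j)"
    using assms by (simp add: sum_distrib_left sum_distrib_right)
  also have "\<dots> = (\<Sum>i<n. \<Sum>k<n. \<Sum>j<n. y i * (w i k * f k * w j k) * y j)"
    by (rule sum.cong[OF refl], rule sum.swap)
  also have "\<dots> = (\<Sum>k<n. \<Sum>i<n. \<Sum>j<n. y i * (w i k * f k * w j k) * y j)"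
    by (rule sum.swap)
  also have "\<dots> = (\<Sum>k<n. f k * (\<Sum>i<n. w i k * y i)\<^sup>2)"
    by (simp add: power2_eq_square sum_product sum_distrib_left mult_ac)
  finally show ?thesis .
qed

lemma parseval:
  fixes g :: "nat \<Rightarrow> nat \<Rightarrow> real" and y :: "nat \<Rightarrow> real"
  assumes "\<forall>i<n. \<forall>j<n. (\<Sum>k<n. g i k * g j k) = (if i = j then 1 else 0)"
  shows "(\<Sum>k<n. (\<Sum>i<n. g i k * y i)\<^sup>2) = (\<Sum>i<n. (y i)\<^sup>2)"
proof -
  have "(\<Sum>i<n. \<Sum>j<n. y i * (if i = j then 1 else 0) * y j) = (\<Sum>k<n. 1 * (\<Sum>i<n. g i k * y i)\<^sup>2)"
    by (rule QF) (use assms in simp)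
  moreover have "(\<Sum>i<n. \<Sum>j<n. y i * (if i = j then 1 else 0) * y j) = (\<Sum>i<n. (y i)\<^sup>2)"
  proof -
    have "\<And>i j. y i * (if i = j then 1 else 0) * y j = (if j = i then (y i)\<^sup>2 else 0)"
      by (auto simp: power2_eq_square)
    then show ?thesis by simp
  qed
  ultimately show ?thesis by simp
qed

lemma diag_quad:
  fixes y c :: "nat \<Rightarrow> real"
  shows "(\<Sum>i<n. \<Sum>j<n. y i * (if i = j then c i else 0) * y j) = (\<Sum>i<n. c i * (y i)\<^sup>2)"
proof -
  have "\<And>i j. y i * (if i = j then c i else 0) * y j = (if j = i then c i * (y i)\<^sup>2 else 0)"
    by (auto simp: power2_eq_square)
  then show ?thesis by simp
qed

lemma delta_sum:
  fixes g :: "nat \<Rightarrow> real"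
  assumes "k < n"
  shows "(\<Sum>m<n. g m * (if m = k then 1 else 0)\<^sup>2) = g k"
proof -
  have "\<And>m. g m * (if m = k then 1 else 0)\<^sup>2 = (if m = k then g k else 0)" by auto
  then show ?thesis using assms by simp
qed

locale two_spec =
  fixes n :: nat and e f x :: "nat \<Rightarrow> real" and u w b1 b2 :: "nat \<Rightarrow> nat \<Rightarrow> real" and d :: real
  assumes uo1: "\<forall>i<n. \<forall>j<n. (\<Sum>k<n. u i k * u j k) = (if i = j then 1 else 0)"
    and uo2: "\<forall>i<n. \<forall>j<n. (\<Sum>k<n. u k i * u k j) = (if i = j then 1 else 0)"
    and wo1: "\<forall>i<n. \<forall>j<n. (\<Sum>k<n. w i k * w j k) = (if i = j then 1 else 0)"
    and wo2: "\<forall>i<n. \<forall>j<n. (\<Sum>k<n. w k i * w k j) = (if i = j then 1 else 0)"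
    and b1: "\<forall>i<n. \<forall>j<n. b1 i j = (\<Sum>k<n. u i k * e k * u j k)"
    and b2: "\<forall>i<n. \<forall>j<n. b2 i j = (\<Sum>k<n. w i k * f k * w j k)"
    and b12: "\<forall>i<n. \<forall>j<n. b1 i j = b2 i j + d * (if i = j then x i else 0)"
begin

lemma quad_split: "(\<Sum>i<n. \<Sum>j<n. y i * b1 i j * y j)
   = (\<Sum>i<n. \<Sum>j<n. y i * b2 i j * y j) + d * (\<Sum>i<n. x i * (y i)\<^sup>2)"
proof -
  have "(\<Sum>i<n. \<Sum>j<n. y i * b1 i j * y j)
     = (\<Sum>i<n. \<Sum>j<n. y i * b2 i j * y j + y i * (if i = j then d * x i else 0) * y j)"
    using b12 by (intro sum.cong refl) (auto simp: algebra_simps)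
  also have "\<dots> = (\<Sum>i<n. \<Sum>j<n. y i * b2 i j * y j) + (\<Sum>i<n. d * x i * (y i)\<^sup>2)"
    by (simp add: sum.distrib diag_quad)
  finally show ?thesis by (simp add: sum_distrib_left mult_ac)
qed

lemma ek_id:
  assumes k: "k < n"
  shows "e k = (\<Sum>m<n. f m * (\<Sum>i<n. w i m * u i k)\<^sup>2) + d * (\<Sum>i<n. x i * (u i k)\<^sup>2)"
proof -
  have "(\<Sum>i<n. \<Sum>j<n. u i k * b1 i j * u j k) = (\<Sum>m<n. e m * (\<Sum>i<n. u i m * u i k)\<^sup>2)"
    by (rule QF[OF b1])
  also have "\<dots> = (\<Sum>m<n. e m * (if m = k then 1 else 0)\<^sup>2)"
    using uo2 k by (intro sum.cong refl) auto
  also have "\<dots> = e k" using delta_sum[OF k] .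
  finally have 1: "(\<Sum>i<n. \<Sum>j<n. u i k * b1 i j * u j k) = e k" .
  have 2: "(\<Sum>i<n. \<Sum>j<n. u i k * b2 i j * u j k) = (\<Sum>m<n. f m * (\<Sum>i<n. w i m * u i k)\<^sup>2)"
    by (rule QF[OF b2])
  show ?thesis using quad_split[of "\<lambda>i. u i k"] 1 2 by simp
qed

lemma partial_id:
  assumes l: "l \<le> n"
  shows "(\<Sum>k<l. e k) = (\<Sum>m<n. f m * (\<Sum>k<l. (\<Sum>i<n. w i m * u i k)\<^sup>2))
     + d * (\<Sum>i<n. x i * (\<Sum>k<l. (u i k)\<^sup>2))"
proof -
  have "(\<Sum>k<l. e k) = (\<Sum>k<l. (\<Sum>m<n. f m * (\<Sum>i<n. w i m * u i k)\<^sup>2) + d * (\<Sum>i<n. x i * (u i k)\<^sup>2))"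
    using ek_id l by (intro sum.cong refl) auto
  also have "\<dots> = (\<Sum>k<l. \<Sum>m<n. f m * (\<Sum>i<n. w i m * u i k)\<^sup>2) + d * (\<Sum>k<l. \<Sum>i<n. x i * (u i k)\<^sup>2)"
    by (simp add: sum.distrib sum_distrib_left)
  also have "(\<Sum>k<l. \<Sum>m<n. f m * (\<Sum>i<n. w i m * u i k)\<^sup>2) = (\<Sum>m<n. \<Sum>k<l. f m * (\<Sum>i<n. w i m * u i k)\<^sup>2)"
    by (rule sum.swap)
  also have "(\<Sum>k<l. \<Sum>i<n. x i * (u i k)\<^sup>2) = (\<Sum>i<n. \<Sum>k<l. x i * (u i k)\<^sup>2)"
    by (rule sum.swap)
  finally show ?thesis by (simp add: sum_distrib_left)
qed

lemma W_full: assumes m: "m < n" shows "(\<Sum>k<n. (\<Sum>i<n. w i m * u i k)\<^sup>2) = 1"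
proof -
  have "(\<Sum>k<n. (\<Sum>i<n. w i m * u i k)\<^sup>2) = (\<Sum>k<n. (\<Sum>i<n. u i k * w i m)\<^sup>2)"
    by (simp add: mult.commute)
  also have "\<dots> = (\<Sum>i<n. (w i m)\<^sup>2)" by (rule parseval) (use uo1 in auto)
  also have "\<dots> = 1" using wo2 m by (simp add: power2_eq_square)
  finally show ?thesis .
qed

lemma W_bounds:
  assumes l: "l \<le> n" and m: "m < n"
  shows "0 \<le> (\<Sum>k<l. (\<Sum>i<n. w i m * u i k)\<^sup>2)" "(\<Sum>k<l. (\<Sum>i<n. w i m * u i k)\<^sup>2) \<le> 1"
proof -
  show "0 \<le> (\<Sum>k<l. (\<Sum>i<n. w i m * u i k)\<^sup>2)" by (intro sum_nonneg) auto
  have "(\<Sum>k<l. (\<Sum>i<n. w i m * u i k)\<^sup>2) \<le> (\<Sum>k<n. (\<Sum>i<n. w i m * u i k)\<^sup>2)"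
    using l by (intro sum_mono2) auto
  then show "(\<Sum>k<l. (\<Sum>i<n. w i m * u i k)\<^sup>2) \<le> 1" using W_full[OF m] by simp
qed

lemma W_sum:
  assumes l: "l \<le> n"
  shows "(\<Sum>m<n. (\<Sum>k<l. (\<Sum>i<n. w i m * u i k)\<^sup>2)) = real l"
proof -
  have "(\<Sum>m<n. (\<Sum>k<l. (\<Sum>i<n. w i m * u i k)\<^sup>2)) = (\<Sum>k<l. \<Sum>m<n. (\<Sum>i<n. w i m * u i k)\<^sup>2)"
    by (rule sum.swap)
  also have "\<dots> = (\<Sum>k<l. \<Sum>i<n. (u i k)\<^sup>2)"
    by (intro sum.cong refl parseval) (use wo1 in auto)
  also have "\<dots> = (\<Sum>k<l. 1)"
    using uo2 l by (intro sum.cong refl) (auto simp: power2_eq_square)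
  finally show ?thesis by simp
qed

lemma V_bounds:
  assumes l: "l \<le> n" and i: "i < n"
  shows "0 \<le> (\<Sum>k<l. (u i k)\<^sup>2)" "(\<Sum>k<l. (u i k)\<^sup>2) \<le> 1"
proof -
  show "0 \<le> (\<Sum>k<l. (u i k)\<^sup>2)" by (intro sum_nonneg) auto
  have "(\<Sum>k<l. (u i k)\<^sup>2) \<le> (\<Sum>k<n. (u i k)\<^sup>2)"
    using l by (intro sum_mono2) auto
  then show "(\<Sum>k<l. (u i k)\<^sup>2) \<le> 1" using uo1 i by (simp add: power2_eq_square)
qed

lemma V_sum:
  assumes l: "l \<le> n"
  shows "(\<Sum>i<n. (\<Sum>k<l. (u i k)\<^sup>2)) = real l"
proof -
  have "(\<Sum>i<n. (\<Sum>k<l. (u i k)\<^sup>2)) = (\<Sum>k<l. \<Sum>i<n. (u i k)\<^sup>2)"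
    by (rule sum.swap)
  also have "\<dots> = (\<Sum>k<l. 1)"
    using uo2 l by (intro sum.cong refl) (auto simp: power2_eq_square)
  finally show ?thesis by simp
qed

lemma swap_lin:
  fixes g :: "nat \<Rightarrow> nat \<Rightarrow> real" and h a :: "nat \<Rightarrow> real"
  shows "(\<Sum>i<n. h i * (\<Sum>k<n. g i k * a k)) = (\<Sum>k<n. (\<Sum>i<n. h i * g i k) * a k)"
proof -
  have "(\<Sum>i<n. h i * (\<Sum>k<n. g i k * a k)) = (\<Sum>i<n. \<Sum>k<n. h i * g i k * a k)"
    by (simp add: sum_distrib_left mult.assoc)
  also have "\<dots> = (\<Sum>k<n. \<Sum>i<n. h i * g i k * a k)" by (rule sum.swap)
  also have "\<dots> = (\<Sum>k<n. (\<Sum>i<n. h i * g i k) * a k)" by (simp add: sum_distrib_right)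
  finally show ?thesis .
qed

lemma weyl:
  fixes a :: "nat \<Rightarrow> real"
  assumes p: "p < n" and d: "0 \<le> d" and x1: "\<forall>i<n. x i \<le> 1"
    and es: "\<forall>i j. i \<le> j \<longrightarrow> j < n \<longrightarrow> e j \<le> e i"
    and fs: "\<forall>i j. i \<le> j \<longrightarrow> j < n \<longrightarrow> f j \<le> f i"
    and a0: "\<forall>k<n. p < k \<longrightarrow> a k = 0" and apos: "0 < (\<Sum>k<n. (a k)\<^sup>2)"
    and ak: "\<forall>m<p. (\<Sum>k<n. (\<Sum>i<n. w i m * u i k) * a k) = 0"
  shows "e p \<le> f p + d"
proof -
  define y where "y i = (\<Sum>k<n. u i k * a k)" for i
  define c where "c m = (\<Sum>i<n. w i m * y i)" for m
  define S where "S = (\<Sum>k<n. (a k)\<^sup>2)"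
  have h1: "(\<Sum>i<n. u i m * y i) = a m" if m: "m < n" for m
  proof -
    have "(\<Sum>i<n. u i m * y i) = (\<Sum>k<n. (\<Sum>i<n. u i m * u i k) * a k)"
      unfolding y_def by (rule swap_lin)
    also have "\<dots> = (\<Sum>k<n. (if k = m then a m else 0))"
      using uo2 m by (intro sum.cong refl) auto
    finally show ?thesis using m by simp
  qed
  have h2: "c m = (\<Sum>k<n. (\<Sum>i<n. w i m * u i k) * a k)" for m
    unfolding c_def y_def by (rule swap_lin)
  have c0: "c m = 0" if "m < p" for m using h2 ak that by simp
  have Q1: "(\<Sum>i<n. \<Sum>j<n. y i * b1 i j * y j) = (\<Sum>m<n. e m * (a m)\<^sup>2)"
    using QF[OF b1, of y] h1 by simp
  have Q2: "(\<Sum>i<n. \<Sum>j<n. y i * b2 i j * y j) = (\<Sum>m<n. f m * (c m)\<^sup>2)"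
    using QF[OF b2, of y] unfolding c_def by simp
  have Sy: "(\<Sum>i<n. (y i)\<^sup>2) = S"
  proof -
    have "(\<Sum>k<n. (\<Sum>i<n. u i k * y i)\<^sup>2) = (\<Sum>i<n. (y i)\<^sup>2)"
      by (rule parseval) (use uo1 in auto)
    moreover have "(\<Sum>k<n. (\<Sum>i<n. u i k * y i)\<^sup>2) = S"
      unfolding S_def using h1 by simp
    ultimately show ?thesis by simp
  qed
  have Sc: "(\<Sum>m<n. (c m)\<^sup>2) = S"
  proof -
    have "(\<Sum>m<n. (\<Sum>i<n. w i m * y i)\<^sup>2) = (\<Sum>i<n. (y i)\<^sup>2)"
      by (rule parseval) (use wo1 in auto)
    then show ?thesis using Sy unfolding c_def by simp
  qed
  have low: "e p * S \<le> (\<Sum>m<n. e m * (a m)\<^sup>2)"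
    unfolding S_def sum_distrib_left
  proof (rule sum_mono)
    fix m assume m: "m \<in> {..<n}"
    show "e p * (a m)\<^sup>2 \<le> e m * (a m)\<^sup>2"
    proof (cases "m \<le> p")
      case True
      then have "e p \<le> e m" using es p by auto
      then show ?thesis by (intro mult_right_mono) auto
    next
      case False
      then show ?thesis using a0 m by auto
    qed
  qed
  have up: "(\<Sum>m<n. f m * (c m)\<^sup>2) \<le> f p * S"
    unfolding Sc[symmetric] sum_distrib_left
  proof (rule sum_mono)
    fix m assume m: "m \<in> {..<n}"
    show "f m * (c m)\<^sup>2 \<le> f p * (c m)\<^sup>2"
    proof (cases "m < p")
      case True
      then show ?thesis using c0 by auto
    next
      case False
      then have "f m \<le> f p" using fs m by auto
      then show ?thesis by (intro mult_right_mono) auto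
    qed
  qed
  have xb: "(\<Sum>i<n. x i * (y i)\<^sup>2) \<le> S"
    unfolding Sy[symmetric]
  proof (rule sum_mono)
    fix i assume "i \<in> {..<n}"
    then have "x i \<le> 1" using x1 by auto
    then show "x i * (y i)\<^sup>2 \<le> (y i)\<^sup>2" using mult_right_mono[of "x i" 1 "(y i)\<^sup>2"] by auto
  qed
  have "e p * S \<le> f p * S + d * S"
    using low up quad_split[of y] Q1 Q2 mult_left_mono[OF xb d] by linarith
  then have "e p * S \<le> (f p + d) * S" by (simp add: algebra_simps)
  moreover have "S > 0" using apos unfolding S_def .
  ultimately show ?thesis by simp
qed

end



lemma sum_if_less:
  fixes g :: "nat \<Rightarrow> real"
  assumes "l \<le> n"
  shows "(\<Sum>m<n. if m < l then g m else 0) = (\<Sum>m<l. g m)"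
proof -
  have "{..<n} \<inter> {m. m < l} = {..<l}" using assms by auto
  then show ?thesis by (simp add: sum.If_cases)
qed

lemma CL:
  fixes e W :: "nat \<Rightarrow> real"
  assumes es: "\<forall>i j. i \<le> j \<longrightarrow> j < n \<longrightarrow> e j \<le> e i"
    and W01: "\<forall>m<n. 0 \<le> W m \<and> W m \<le> 1" and Ws: "(\<Sum>m<n. W m) = real l" and l: "l \<le> n"
  shows "(\<Sum>m<n. e m * W m) \<le> (\<Sum>m<l. e m)"
proof (cases "l = 0")
  case True
  then have "\<forall>m\<in>{..<n}. W m = 0" using Ws W01 sum_nonneg_eq_0_iff[of "{..<n}" W] by auto
  then show ?thesis using True by simp
next
  case False
  define c where "c = e (l - 1)"
  have "(\<Sum>m<n. e m * W m) \<le> (\<Sum>m<n. c * W m + (if m < l then e m - c else 0))"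
  proof (rule sum_mono)
    fix m assume m: "m \<in> {..<n}"
    show "e m * W m \<le> c * W m + (if m < l then e m - c else 0)"
    proof (cases "m < l")
      case True
      then have "c \<le> e m" unfolding c_def using es[rule_format, of m "l - 1"] m l by auto
      then have "(e m - c) * W m \<le> (e m - c) * 1" using W01 m by (intro mult_left_mono) auto
      then show ?thesis using True by (simp add: algebra_simps)
    next
      case f: False
      then have "e m \<le> c" unfolding c_def using es[rule_format, of "l - 1" m] m False by auto
      then have "e m * W m \<le> c * W m" using W01 m by (intro mult_right_mono) auto
      then show ?thesis using f by simp
    qed
  qed
  also have "\<dots> = c * real l + (\<Sum>m<l. e m - c)"
    by (simp add: sum.distrib sum_distrib_left[symmetric] Ws sum_if_less[OF l])
  also have "\<dots> = (\<Sum>m<l. e m)" by (simp add: sum_subtractf)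
  finally show ?thesis .
qed

lemma sum_list_take_nth:
  fixes xs :: "real list"
  assumes "l \<le> length xs"
  shows "sum_list (take l xs) = (\<Sum>k<l. xs ! k)"
  using assms by (simp add: sum_list_sum_nth lessThan_atLeast0 min_def)

lemma sum_list_map_nth:
  fixes xs :: "real list"
  shows "sum_list (map g xs) = (\<Sum>k<length xs. g (xs ! k))"
  by (simp add: sum_list_sum_nth lessThan_atLeast0)

lemma sum_list_map_mset:
  fixes xs ys :: "real list" and g :: "real \<Rightarrow> real"
  assumes "mset xs = mset ys"
  shows "sum_list (map g xs) = sum_list (map g ys)"
proof -
  have "sum_list (map g xs) = sum_mset (image_mset g (mset xs))" by (simp add: sum_mset_sum_list[symmetric])
  also have "\<dots> = sum_mset (image_mset g (mset ys))" using assms by simp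
  also have "\<dots> = sum_list (map g ys)" by (simp add: sum_mset_sum_list[symmetric])
  finally show ?thesis .
qed

lemma desc_props:
  shows "length (desc xs) = length xs" "mset (desc xs) = mset xs"
    "\<forall>i j. i \<le> j \<longrightarrow> j < length xs \<longrightarrow> desc xs ! j \<le> desc xs ! i"
proof -
  show "length (desc xs) = length xs" "mset (desc xs) = mset xs" unfolding desc_def by auto
  have "sorted_wrt (\<ge>) (desc xs)" unfolding desc_def by (simp add: sorted_wrt_rev)
  then have *: "\<forall>i j. i < j \<longrightarrow> j < length (desc xs) \<longrightarrow> desc xs ! j \<le> desc xs ! i"
    by (simp add: sorted_wrt_iff_nth_less)
  then show "\<forall>i j. i \<le> j \<longrightarrow> j < length xs \<longrightarrow> desc xs ! j \<le> desc xs ! i"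
  proof (intro allI impI)
    fix i j assume ij: "i \<le> j" and j: "j < length xs"
    show "desc xs ! j \<le> desc xs ! i"
    proof (cases "i = j")
      case False
      then show ?thesis using * ij j unfolding desc_def by simp
    qed simp
  qed
qed

lemma CL_desc:
  fixes xs :: "real list" and V :: "nat \<Rightarrow> real"
  assumes len: "length xs = n" and V01: "\<forall>m<n. 0 \<le> V m \<and> V m \<le> 1"
    and Vs: "(\<Sum>m<n. V m) = real l" and l1: "1 \<le> l" and l: "l \<le> n"
  shows "(\<Sum>i<n. xs ! i * V i) \<le> sum_list (take l (desc xs))"
proof -
  define ds where "ds = desc xs"
  have lds: "length ds = n" and mds: "mset ds = mset xs"
    and sds: "\<forall>i j. i \<le> j \<longrightarrow> j < n \<longrightarrow> ds ! j \<le> ds ! i"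
    using desc_props[of xs] len unfolding ds_def by auto
  define c where "c = ds ! (l - 1)"
  have "(\<Sum>i<n. xs ! i * V i) \<le> (\<Sum>i<n. c * V i + max (xs ! i - c) 0)"
  proof (rule sum_mono)
    fix i assume i: "i \<in> {..<n}"
    have "0 \<le> V i" "V i \<le> 1" using V01 i by auto
    show "xs ! i * V i \<le> c * V i + max (xs ! i - c) 0"
    proof (cases "c \<le> xs ! i")
      case True
      then have "(xs ! i - c) * V i \<le> (xs ! i - c) * 1" using \<open>V i \<le> 1\<close> by (intro mult_left_mono) auto
      then show ?thesis using True by (simp add: algebra_simps)
    next
      case False
      then have "xs ! i * V i \<le> c * V i" using \<open>0 \<le> V i\<close> by (intro mult_right_mono) auto
      then show ?thesis by simp
    qed
  qed
  also have "\<dots> = c * real l + (\<Sum>i<n. max (xs ! i - c) 0)"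
    by (simp add: sum.distrib sum_distrib_left[symmetric] Vs)
  also have "(\<Sum>i<n. max (xs ! i - c) 0) = sum_list (map (\<lambda>z. max (z - c) 0) xs)"
    using sum_list_map_nth[of "\<lambda>z. max (z - c) 0" xs] len by simp
  also have "\<dots> = sum_list (map (\<lambda>z. max (z - c) 0) ds)"
    using sum_list_map_mset[OF mds[symmetric]] by simp
  also have "\<dots> = (\<Sum>k<n. max (ds ! k - c) 0)"
    using sum_list_map_nth[of "\<lambda>z. max (z - c) 0" ds] lds by simp
  also have "\<dots> = (\<Sum>k<n. if k < l then ds ! k - c else 0)"
  proof (rule sum.cong[OF refl])
    fix k assume k: "k \<in> {..<n}"
    show "max (ds ! k - c) 0 = (if k < l then ds ! k - c else 0)"
    proof (cases "k < l")
      case True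
      then have "c \<le> ds ! k" unfolding c_def using sds[rule_format, of k "l - 1"] l by auto
      then show ?thesis using True by simp
    next
      case False
      then have "ds ! k \<le> c" unfolding c_def using sds[rule_format, of "l - 1" k] k l1 by auto
      then show ?thesis using False by simp
    qed
  qed
  also have "\<dots> = (\<Sum>k<l. ds ! k - c)" by (rule sum_if_less[OF l])
  also have "c * real l + \<dots> = (\<Sum>k<l. ds ! k)" by (simp add: sum_subtractf)
  also have "\<dots> = sum_list (take l ds)" using sum_list_take_nth[of l ds] lds l by simp
  finally show ?thesis unfolding ds_def .
qed



lemma kernel_exists:
  fixes q :: "nat \<Rightarrow> nat \<Rightarrow> real"
  assumes p: "p < n"
  shows "\<exists>a. (\<forall>k<n. p < k \<longrightarrow> a k = 0) \<and> 0 < (\<Sum>k<n. (a k)\<^sup>2) \<and> (\<forall>m<p. (\<Sum>k<n. q m k * a k) = 0)"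
proof -
  define K where "K = mat\<^sub>r (Suc p) (Suc p) (\<lambda>i. if i = p then 0\<^sub>v (Suc p) else vec (Suc p) (\<lambda>k. q i k))"
  have Kc: "K \<in> carrier_mat (Suc p) (Suc p)" unfolding K_def by simp
  have "det K = 0" unfolding K_def by (rule det_row_0) auto
  then obtain v where v: "v \<in> carrier_vec (Suc p)" and v0: "v \<noteq> 0\<^sub>v (Suc p)" and Kv: "K *\<^sub>v v = 0\<^sub>v (Suc p)"
    using det_0_iff_vec_prod_zero_field[OF Kc] by blast
  define a where "a k = (if k < Suc p then v $ k else 0)" for k
  have sa: "(\<Sum>k<n. g k * a k) = (\<Sum>k<Suc p. g k * v $ k)" for g
  proof -
    have "(\<Sum>k<n. g k * a k) = (\<Sum>k<n. if k < Suc p then g k * v $ k else 0)"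
      unfolding a_def by (intro sum.cong refl) auto
    also have "\<dots> = (\<Sum>k<Suc p. g k * v $ k)" using p by (intro sum_if_less) auto
    finally show ?thesis .
  qed
  have "(\<forall>k<n. p < k \<longrightarrow> a k = 0)" unfolding a_def by auto
  moreover have "0 < (\<Sum>k<n. (a k)\<^sup>2)"
  proof -
    obtain k where k: "k < Suc p" and vk: "v $ k \<noteq> 0"
      using v v0 by (metis carrier_vecD eq_vecI index_zero_vec(1) index_zero_vec(2))
    have "(\<Sum>k<n. (a k)\<^sup>2) = (\<Sum>k<Suc p. a k * v $ k)"
      using sa[of a] unfolding power2_eq_square by simp
    also have "\<dots> = (\<Sum>k<Suc p. v $ k * v $ k)"
      unfolding a_def by (intro sum.cong refl) auto
    also have "\<dots> > 0"
      by (rule sum_pos2[of _ k]) (use k vk in \<open>auto simp: zero_less_mult_iff linorder_neq_iff\<close>)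
    finally show ?thesis .
  qed
  moreover have "\<forall>m<p. (\<Sum>k<n. q m k * a k) = 0"
  proof (intro allI impI)
    fix m assume m: "m < p"
    have "(K *\<^sub>v v) $ m = 0" using Kv m by simp
    moreover have "(K *\<^sub>v v) $ m = (\<Sum>k<Suc p. q m k * v $ k)"
      using m v unfolding K_def by (simp add: scalar_prod_def lessThan_atLeast0)
    ultimately show "(\<Sum>k<n. q m k * a k) = 0" using sa by simp
  qed
  ultimately show ?thesis by blast
qed

lemma spectral_fun:
  fixes B :: "real mat"
  assumes B: "B \<in> carrier_mat n n" and sym: "transpose_mat B = B"
    and cp: "char_poly B = (\<Prod>a\<leftarrow>es. [:-a,1:])"
  shows "\<exists>u. (\<forall>i<n. \<forall>j<n. (\<Sum>k<n. u i k * u j k) = (if i = j then 1 else 0)) \<and>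
             (\<forall>i<n. \<forall>j<n. (\<Sum>k<n. u k i * u k j) = (if i = j then 1 else 0)) \<and>
             (\<forall>i<n. \<forall>j<n. B $$ (i,j) = (\<Sum>k<n. u i k * es ! k * u j k))"
proof -
  obtain U where U: "U \<in> carrier_mat n n" and UTU: "transpose_mat U * U = 1\<^sub>m n"
    and UD: "transpose_mat U * B * U = diag_of n es"
    using spectral[OF B sym cp] by blast
  have UT: "transpose_mat U \<in> carrier_mat n n" using U by auto
  have UUT: "U * transpose_mat U = 1\<^sub>m n" using mat_mult_left_right_inverse[OF UT U UTU] .
  define D where "D = diag_of n es"
  have Dc: "D \<in> carrier_mat n n" unfolding D_def diag_of_def by auto
  have "U * D * transpose_mat U = U * (transpose_mat U * B * U) * transpose_mat U"
    unfolding D_def UD ..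
  also have "\<dots> = (U * transpose_mat U) * B * (U * transpose_mat U)"
    using U UT B by (simp add: assoc_mult_mat[of _ n n _ n _ n])
  also have "\<dots> = B" unfolding UUT using B by simp
  finally have BD: "B = U * D * transpose_mat U" by simp
  define u where "u i k = U $$ (i, k)" for i k
  have o1: "\<forall>i<n. \<forall>j<n. (\<Sum>k<n. u i k * u j k) = (if i = j then 1 else 0)"
  proof (intro allI impI)
    fix i j assume i: "i < n" and j: "j < n"
    have "(U * transpose_mat U) $$ (i, j) = (\<Sum>k<n. u i k * u j k)"
      using U i j unfolding u_def by (simp add: scalar_prod_def lessThan_atLeast0)
    then show "(\<Sum>k<n. u i k * u j k) = (if i = j then 1 else 0)" unfolding UUT using i j by simp
  qed
  have o2: "\<forall>i<n. \<forall>j<n. (\<Sum>k<n. u k i * u k j) = (if i = j then 1 else 0)"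
  proof (intro allI impI)
    fix i j assume i: "i < n" and j: "j < n"
    have "(transpose_mat U * U) $$ (i, j) = (\<Sum>k<n. u k i * u k j)"
      using U i j unfolding u_def by (simp add: scalar_prod_def lessThan_atLeast0)
    then show "(\<Sum>k<n. u k i * u k j) = (if i = j then 1 else 0)" unfolding UTU using i j by simp
  qed
  have bb: "\<forall>i<n. \<forall>j<n. B $$ (i,j) = (\<Sum>k<n. u i k * es ! k * u j k)"
  proof (intro allI impI)
    fix i j assume i: "i < n" and j: "j < n"
    have UDik: "(U * D) $$ (i, k) = u i k * es ! k" if k: "k < n" for k
    proof -
      have "(U * D) $$ (i, k) = (\<Sum>r<n. U $$ (i, r) * (if r = k then es ! r else 0))"
        using U Dc i k unfolding D_def diag_of_def by (simp add: scalar_prod_def lessThan_atLeast0)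
      also have "\<dots> = (\<Sum>r<n. if r = k then U $$ (i, k) * es ! k else 0)"
        by (intro sum.cong refl) auto
      finally show ?thesis using k unfolding u_def by simp
    qed
    have "B $$ (i, j) = (\<Sum>k<n. (U * D) $$ (i, k) * U $$ (j, k))"
      unfolding BD using U Dc i j by (simp add: scalar_prod_def lessThan_atLeast0 del: assoc_mult_mat)
    also have "\<dots> = (\<Sum>k<n. u i k * es ! k * u j k)"
      using UDik unfolding u_def by (intro sum.cong refl) auto
    finally show "B $$ (i,j) = (\<Sum>k<n. u i k * es ! k * u j k)" .
  qed
  show ?thesis using o1 o2 bb by blast
qed

lemma Mt_charpoly:
  fixes A C :: "real mat" and x :: "real vec" and t :: real
  assumes C: "C \<in> carrier_mat n n" and x: "x \<in> carrier_vec n" and x0: "\<forall>i<n. 0 \<le> x $ i"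
    and ch: "cholesky_factor n A (C - t \<cdot>\<^sub>m 1\<^sub>m n)"
  shows "char_poly (M_mat n A x) =
    char_poly (mat n n (\<lambda>(i,j). sqrt (x $ i) * (C $$ (i,j) - (if i = j then t else 0)) * sqrt (x $ j)))"
proof -
  have A: "A \<in> carrier_mat n n" and AA: "C - t \<cdot>\<^sub>m 1\<^sub>m n = transpose_mat A * A"
    using ch unfolding cholesky_factor_def by auto
  define Dm where "Dm = mat n n (\<lambda>(i,j). if i = j then sqrt (x $ i) else (0::real))"
  have Dc: "Dm \<in> carrier_mat n n" unfolding Dm_def by simp
  define P where "P = A * Dm"
  define Q where "Q = Dm * transpose_mat A"
  have Pc: "P \<in> carrier_mat n n" unfolding P_def using A Dc by auto
  have Qc: "Q \<in> carrier_mat n n" unfolding Q_def using A Dc by auto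
  have Pe: "P $$ (j, i) = A $$ (j, i) * sqrt (x $ i)" if "j < n" "i < n" for i j
  proof -
    have "P $$ (j, i) = (\<Sum>r<n. A $$ (j, r) * (if r = i then sqrt (x $ r) else 0))"
      unfolding P_def Dm_def using A that by (simp add: scalar_prod_def lessThan_atLeast0)
    also have "\<dots> = (\<Sum>r<n. if r = i then A $$ (j, i) * sqrt (x $ i) else 0)"
      by (intro sum.cong refl) auto
    finally show ?thesis using that by simp
  qed
  have Qe: "Q $$ (i, k) = sqrt (x $ i) * A $$ (k, i)" if "i < n" "k < n" for i k
  proof -
    have "Q $$ (i, k) = (\<Sum>r<n. (if i = r then sqrt (x $ i) else 0) * A $$ (k, r))"
      unfolding Q_def Dm_def using A that by (simp add: scalar_prod_def lessThan_atLeast0)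
    also have "\<dots> = (\<Sum>r<n. if r = i then sqrt (x $ i) * A $$ (k, i) else 0)"
      by (intro sum.cong refl) auto
    finally show ?thesis using that by simp
  qed
  have PQ: "P * Q = M_mat n A x"
  proof (rule eq_matI)
    fix j k assume "j < dim_row (M_mat n A x)" "k < dim_col (M_mat n A x)"
    then have j: "j < n" and k: "k < n" unfolding M_mat_def by auto
    have "(P * Q) $$ (j, k) = (\<Sum>i<n. P $$ (j, i) * Q $$ (i, k))"
      using Pc Qc j k by (simp add: scalar_prod_def lessThan_atLeast0)
    also have "\<dots> = (\<Sum>i<n. x $ i * (A $$ (j, i) * A $$ (k, i)))"
    proof (intro sum.cong refl)
      fix i assume i: "i \<in> {..<n}"
      have "sqrt (x $ i) * sqrt (x $ i) = x $ i" using i x0 by simp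
      then show "P $$ (j, i) * Q $$ (i, k) = x $ i * (A $$ (j, i) * A $$ (k, i))"
        using Pe[OF j] Qe[OF _ k] i by (simp add: algebra_simps)
    qed
    also have "\<dots> = M_mat n A x $$ (j, k)"
      unfolding M_mat_def outer_def using A j k by simp
    finally show "(P * Q) $$ (j, k) = M_mat n A x $$ (j, k)" .
  qed (insert Pc Qc, auto simp: M_mat_def)
  have QP: "Q * P = mat n n (\<lambda>(i,j). sqrt (x $ i) * (C $$ (i,j) - (if i = j then t else 0)) * sqrt (x $ j))"
  proof (rule eq_matI)
    fix i k assume "i < dim_row (mat n n (\<lambda>(i,j). sqrt (x $ i) * (C $$ (i,j) - (if i = j then t else 0)) * sqrt (x $ j)))"
      "k < dim_col (mat n n (\<lambda>(i,j). sqrt (x $ i) * (C $$ (i,j) - (if i = j then t else 0)) * sqrt (x $ j)))"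
    then have i: "i < n" and k: "k < n" by auto
    have "(Q * P) $$ (i, k) = (\<Sum>j<n. Q $$ (i, j) * P $$ (j, k))"
      using Pc Qc i k by (simp add: scalar_prod_def lessThan_atLeast0)
    also have "\<dots> = (\<Sum>j<n. sqrt (x $ i) * (A $$ (j, i) * A $$ (j, k)) * sqrt (x $ k))"
      using Pe[OF _ k] Qe[OF i] by (intro sum.cong refl) (auto simp: algebra_simps)
    also have "\<dots> = sqrt (x $ i) * (\<Sum>j<n. A $$ (j, i) * A $$ (j, k)) * sqrt (x $ k)"
      by (simp add: sum_distrib_left sum_distrib_right)
    also have "(\<Sum>j<n. A $$ (j, i) * A $$ (j, k)) = (transpose_mat A * A) $$ (i, k)"
      using A i k by (simp add: scalar_prod_def lessThan_atLeast0)
    also have "\<dots> = C $$ (i, k) - (if i = k then t else 0)"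
      unfolding AA[symmetric] using C i k by simp
    finally show "(Q * P) $$ (i, k) = mat n n (\<lambda>(i,j). sqrt (x $ i) * (C $$ (i,j) - (if i = j then t else 0)) * sqrt (x $ j)) $$ (i, k)"
      using i k by simp
  qed (insert Pc Qc, auto)
  show ?thesis using char_poly_comm[OF Pc Qc] PQ QP by simp
qed



lemma desc_sorted:
  fixes L :: "real list"
  assumes "sorted_wrt (\<ge>) L"
  shows "desc L = L"
proof -
  have "sorted (rev L)" using assms by (simp add: sorted_wrt_rev)
  then have "sort L = rev L" by (intro properties_for_sort) auto
  then show ?thesis unfolding desc_def by simp
qed

lemma L_props:
  fixes mu :: "real list"
  assumes "length mu = n"
  shows "length (map2 (+) mu (map ((*) t) (ind_vec n s))) = n"
    "\<And>k. k < n \<Longrightarrow> map2 (+) mu (map ((*) t) (ind_vec n s)) ! k = mu ! k + (if k < s then t else 0)"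
  using assms by (auto simp: ind_vec_def)

lemma ind_sum:
  "(\<Sum>k<l. (if k < s then t else 0)) = t * real (min l s)"
proof (cases "l \<le> s")
  case True
  then have "(\<Sum>k<l. (if k < s then t else 0)) = (\<Sum>k<l. t)" by (intro sum.cong refl) auto
  then show ?thesis using True by simp
next
  case False
  then have "(\<Sum>k<l. (if k < s then t else (0::real))) = (\<Sum>k<s. t)" by (intro sum_if_less) auto
  then show ?thesis using False by simp
qed

lemma L_sorted:
  fixes mu :: "real list"
  assumes len: "length mu = n" and srt: "sorted_wrt (\<ge>) mu" and t: "0 \<le> t"
  shows "sorted_wrt (\<ge>) (map2 (+) mu (map ((*) t) (ind_vec n s)))"
proof -
  have m: "mu ! j \<le> mu ! i" if "i < j" "j < n" for i j
    using srt that len by (simp add: sorted_wrt_iff_nth_less)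
  show ?thesis
    unfolding sorted_wrt_iff_nth_less L_props(1)[OF len]
  proof (intro allI impI)
    fix i j assume ij: "i < j" and j: "j < n"
    have "mu ! j + (if j < s then t else 0) \<le> mu ! i + (if i < s then t else 0)"
      using m[OF ij j] ij t by auto
    then show "map2 (+) mu (map ((*) t) (ind_vec n s)) ! j \<le> map2 (+) mu (map ((*) t) (ind_vec n s)) ! i"
      using L_props(2)[OF len] ij j by (metis order.strict_trans)
  qed
qed

lemma L_take:
  fixes mu :: "real list"
  assumes len: "length mu = n" and l: "l \<le> n"
  shows "sum_list (take l (map2 (+) mu (map ((*) t) (ind_vec n s)))) = (\<Sum>k<l. mu ! k) + t * real (min l s)"
proof -
  have "sum_list (take l (map2 (+) mu (map ((*) t) (ind_vec n s))))
      = (\<Sum>k<l. map2 (+) mu (map ((*) t) (ind_vec n s)) ! k)"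
    using sum_list_take_nth[of l] L_props(1)[OF len] l by simp
  also have "\<dots> = (\<Sum>k<l. mu ! k + (if k < s then t else 0))"
    using L_props(2)[OF len] l by (intro sum.cong refl) auto
  also have "\<dots> = (\<Sum>k<l. mu ! k) + t * real (min l s)" by (simp add: sum.distrib ind_sum)
  finally show ?thesis .
qed

lemma Bt_props:
  fixes C :: "real mat" and x :: "real vec" and t :: real
  assumes C: "C \<in> carrier_mat n n" and sym: "transpose_mat C = C"
  defines "B \<equiv> mat n n (\<lambda>(i,j). sqrt (x $ i) * (C $$ (i,j) - (if i = j then t else 0)) * sqrt (x $ j))"
  shows "B \<in> carrier_mat n n" "transpose_mat B = B"
proof -
  show "B \<in> carrier_mat n n" unfolding B_def by simp
  show "transpose_mat B = B"
  proof (rule eq_matI)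
    fix i j assume "i < dim_row B" "j < dim_col B"
    then have i: "i < n" and j: "j < n" unfolding B_def by auto
    have "C $$ (j, i) = C $$ (i, j)" using arg_cong[OF sym, of "\<lambda>M. M $$ (i, j)"] C i j by simp
    then show "transpose_mat B $$ (i, j) = B $$ (i, j)" unfolding B_def using i j by auto
  qed (auto simp: B_def)
qed

theorem lemma1:
  fixes n s :: nat and C A1 A2 :: "real mat" and x :: "real vec"
    and t1 t2 :: real and nu mu :: "real list"
  assumes "n \<ge> 1" and "s \<in> {1..n}"
    and "sym_pos_def_mat n C"
    and "x \<in> carrier_vec n" and "\<forall>i<n. 0 \<le> x $ i \<and> x $ i \<le> 1"
    and "(\<Sum>i<n. x $ i) = real s"
    and "0 \<le> t1" and "t1 \<le> t2" and "t2 \<le> lambda_min C"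
    and "cholesky_factor n A1 (C - t1 \<cdot>\<^sub>m 1\<^sub>m n)"
    and "cholesky_factor n A2 (C - t2 \<cdot>\<^sub>m 1\<^sub>m n)"
    and "sorted_eigvals (M_mat n A1 x) nu"
    and "sorted_eigvals (M_mat n A2 x) mu"
  shows "majorizes (map2 (+) mu (map ((*) t2) (ind_vec n s)))
                   (map2 (+) nu (map ((*) t1) (ind_vec n s))) \<and>
         (\<forall>l \<in> {1..s}. sum_list (take l mu) + (t2 - t1) * sum_list (take l (desc (list_of_vec x)))
                       \<ge> sum_list (take l nu)) \<and>
         (\<forall>i \<in> {1..s}. mu ! (i - 1) + t2 - t1 \<ge> nu ! (i - 1))"
proof -
  note a = assms
  have s: "1 \<le> s" "s \<le> n" using a(2) by auto
  have C: "C \<in> carrier_mat n n" and Csym: "transpose_mat C = C"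
    using a(3) unfolding sym_pos_def_mat_def by auto
  have x: "x \<in> carrier_vec n" using a(4) .
  have x0: "\<forall>i<n. 0 \<le> x $ i" and x1: "\<forall>i<n. x $ i \<le> 1" using a(5) by auto
  define B1 where "B1 = mat n n (\<lambda>(i,j). sqrt (x $ i) * (C $$ (i,j) - (if i = j then t1 else 0)) * sqrt (x $ j))"
  define B2 where "B2 = mat n n (\<lambda>(i,j). sqrt (x $ i) * (C $$ (i,j) - (if i = j then t2 else 0)) * sqrt (x $ j))"
  have B1c: "B1 \<in> carrier_mat n n" and B1s: "transpose_mat B1 = B1"
    using Bt_props[OF C Csym, of x t1] unfolding B1_def by auto
  have B2c: "B2 \<in> carrier_mat n n" and B2s: "transpose_mat B2 = B2"
    using Bt_props[OF C Csym, of x t2] unfolding B2_def by auto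
  have Mc: "M_mat n A1 x \<in> carrier_mat n n" "M_mat n A2 x \<in> carrier_mat n n" unfolding M_mat_def by auto
  have lnu: "length nu = n" and snu: "sorted_wrt (\<ge>) nu" and cpnu: "char_poly (M_mat n A1 x) = (\<Prod>a\<leftarrow>nu. [:- a, 1:])"
    using a(12) Mc unfolding sorted_eigvals_def by auto
  have lmu: "length mu = n" and smu: "sorted_wrt (\<ge>) mu" and cpmu: "char_poly (M_mat n A2 x) = (\<Prod>a\<leftarrow>mu. [:- a, 1:])"
    using a(13) Mc unfolding sorted_eigvals_def by auto
  have cp1: "char_poly B1 = (\<Prod>a\<leftarrow>nu. [:- a, 1:])"
    using Mt_charpoly[OF C x x0 a(10)] cpnu unfolding B1_def by simp
  have cp2: "char_poly B2 = (\<Prod>a\<leftarrow>mu. [:- a, 1:])"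
    using Mt_charpoly[OF C x x0 a(11)] cpmu unfolding B2_def by simp
  obtain u where uo1: "\<forall>i<n. \<forall>j<n. (\<Sum>k<n. u i k * u j k) = (if i = j then 1 else 0)"
    and uo2: "\<forall>i<n. \<forall>j<n. (\<Sum>k<n. u k i * u k j) = (if i = j then 1 else 0)"
    and ub: "\<forall>i<n. \<forall>j<n. B1 $$ (i,j) = (\<Sum>k<n. u i k * nu ! k * u j k)"
    using spectral_fun[OF B1c B1s cp1] by blast
  obtain w where wo1: "\<forall>i<n. \<forall>j<n. (\<Sum>k<n. w i k * w j k) = (if i = j then 1 else 0)"
    and wo2: "\<forall>i<n. \<forall>j<n. (\<Sum>k<n. w k i * w k j) = (if i = j then 1 else 0)"
    and wb: "\<forall>i<n. \<forall>j<n. B2 $$ (i,j) = (\<Sum>k<n. w i k * mu ! k * w j k)"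
    using spectral_fun[OF B2c B2s cp2] by blast
  have b12: "\<forall>i<n. \<forall>j<n. B1 $$ (i,j) = B2 $$ (i,j) + (t2 - t1) * (if i = j then x $ i else 0)"
  proof (intro allI impI)
    fix i j assume i: "i < n" and j: "j < n"
    show "B1 $$ (i,j) = B2 $$ (i,j) + (t2 - t1) * (if i = j then x $ i else 0)"
    proof (cases "i = j")
      case True
      have "sqrt (x $ i) * sqrt (x $ i) = x $ i" using x0 i by simp
      then show ?thesis using True i unfolding B1_def B2_def by (simp add: algebra_simps)
    next
      case False
      then show ?thesis using i j unfolding B1_def B2_def by simp
    qed
  qed
  interpret T: two_spec n "\<lambda>k. nu ! k" "\<lambda>k. mu ! k" "\<lambda>i. x $ i" u w
    "\<lambda>i j. B1 $$ (i,j)" "\<lambda>i j. B2 $$ (i,j)" "t2 - t1"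
    by unfold_locales (use uo1 uo2 wo1 wo2 ub wb b12 in auto)
  have nus: "\<forall>i j. i \<le> j \<longrightarrow> j < n \<longrightarrow> nu ! j \<le> nu ! i"
    using snu lnu by (auto simp: sorted_wrt_iff_nth_less le_less)
  have mus: "\<forall>i j. i \<le> j \<longrightarrow> j < n \<longrightarrow> mu ! j \<le> mu ! i"
    using smu lmu by (auto simp: sorted_wrt_iff_nth_less le_less)
  have d0: "0 \<le> t2 - t1" using a(8) by simp
  define V where "V l i = (\<Sum>k<l. (u i k)\<^sup>2)" for l i
  define W where "W l m = (\<Sum>k<l. (\<Sum>i<n. w i m * u i k)\<^sup>2)" for l m
  have key: "(\<Sum>k<l. nu ! k) \<le> (\<Sum>k<l. mu ! k) + (t2 - t1) * (\<Sum>i<n. x $ i * V l i)" if l: "l \<le> n" for l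
  proof -
    have "(\<Sum>k<l. nu ! k) = (\<Sum>m<n. mu ! m * W l m) + (t2 - t1) * (\<Sum>i<n. x $ i * V l i)"
      using T.partial_id[OF l] unfolding V_def W_def .
    moreover have "(\<Sum>m<n. mu ! m * W l m) \<le> (\<Sum>m<l. mu ! m)"
      by (rule CL[OF mus _ _ l]) (use T.W_bounds[OF l] T.W_sum[OF l] in \<open>auto simp: W_def\<close>)
    ultimately show ?thesis by simp
  qed
  have V01: "\<forall>i<n. 0 \<le> V l i \<and> V l i \<le> 1" if "l \<le> n" for l
    using T.V_bounds[OF that] unfolding V_def by auto
  have Vs: "(\<Sum>i<n. V l i) = real l" if "l \<le> n" for l
    using T.V_sum[OF that] unfolding V_def by auto
  have SV: "(\<Sum>i<n. x $ i * V l i) \<le> real (min l s)" if l: "l \<le> n" for l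
  proof -
    have "(\<Sum>i<n. x $ i * V l i) \<le> (\<Sum>i<n. V l i)"
      using V01[OF l] x1 by (intro sum_mono) (metis lessThan_iff mult_left_le_one_le mult.commute x0)
    moreover have "(\<Sum>i<n. x $ i * V l i) \<le> (\<Sum>i<n. x $ i)"
      using V01[OF l] x0 by (intro sum_mono) (metis lessThan_iff mult_right_le_one_le)
    ultimately show ?thesis using Vs[OF l] a(6) by (simp add: min_def)
  qed
  have P1: "majorizes (map2 (+) mu (map ((*) t2) (ind_vec n s)))
                   (map2 (+) nu (map ((*) t1) (ind_vec n s)))"
  proof -
    have dL2: "desc (map2 (+) mu (map ((*) t2) (ind_vec n s))) = map2 (+) mu (map ((*) t2) (ind_vec n s))"
      using desc_sorted L_sorted[OF lmu smu] a(7,8) by simp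
    have dL1: "desc (map2 (+) nu (map ((*) t1) (ind_vec n s))) = map2 (+) nu (map ((*) t1) (ind_vec n s))"
      using desc_sorted L_sorted[OF lnu snu] a(7) by simp
    have part: "sum_list (take l (map2 (+) nu (map ((*) t1) (ind_vec n s))))
        \<le> sum_list (take l (map2 (+) mu (map ((*) t2) (ind_vec n s))))" if l: "l \<le> n" for l
    proof -
      have "(t2 - t1) * (\<Sum>i<n. x $ i * V l i) \<le> (t2 - t1) * real (min l s)"
        using SV[OF l] d0 by (intro mult_left_mono) auto
      then show ?thesis using key[OF l] L_take[OF lmu l] L_take[OF lnu l] by (simp add: algebra_simps)
    qed
    have eq: "sum_list (map2 (+) mu (map ((*) t2) (ind_vec n s))) = sum_list (map2 (+) nu (map ((*) t1) (ind_vec n s)))"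
    proof -
      have "(\<Sum>k<n. nu ! k) = (\<Sum>m<n. mu ! m * W n m) + (t2 - t1) * (\<Sum>i<n. x $ i * V n i)"
        using T.partial_id[OF order.refl] unfolding V_def W_def .
      moreover have "(\<Sum>m<n. mu ! m * W n m) = (\<Sum>m<n. mu ! m)"
        using T.W_full unfolding W_def by simp
      moreover have "(\<Sum>i<n. x $ i * V n i) = real s"
        using uo1 a(6) unfolding V_def by (simp add: power2_eq_square)
      ultimately have "(\<Sum>k<n. nu ! k) = (\<Sum>m<n. mu ! m) + (t2 - t1) * real s" by simp
      moreover have "sum_list (map2 (+) mu (map ((*) t2) (ind_vec n s))) = (\<Sum>k<n. mu ! k) + t2 * real s"
        using L_take[OF lmu order.refl, of t2 s] L_props(1)[OF lmu] s by simp
      moreover have "sum_list (map2 (+) nu (map ((*) t1) (ind_vec n s))) = (\<Sum>k<n. nu ! k) + t1 * real s"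
        using L_take[OF lnu order.refl, of t1 s] L_props(1)[OF lnu] s by simp
      ultimately show ?thesis by (simp add: algebra_simps)
    qed
    show ?thesis unfolding majorizes_def dL1 dL2
      using L_props(1)[OF lmu] L_props(1)[OF lnu] part eq by auto
  qed
  have P2: "\<forall>l \<in> {1..s}. sum_list (take l mu) + (t2 - t1) * sum_list (take l (desc (list_of_vec x)))
                       \<ge> sum_list (take l nu)"
  proof
    fix l assume "l \<in> {1..s}"
    then have l1: "1 \<le> l" and l: "l \<le> n" using s by auto
    have lx: "length (list_of_vec x) = n" using x by simp
    have "(\<Sum>i<n. list_of_vec x ! i * V l i) \<le> sum_list (take l (desc (list_of_vec x)))"
      by (rule CL_desc[OF lx V01[OF l] Vs[OF l] l1 l])
    moreover have "(\<Sum>i<n. list_of_vec x ! i * V l i) = (\<Sum>i<n. x $ i * V l i)"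
      using x by (intro sum.cong refl) auto
    ultimately have "(t2 - t1) * (\<Sum>i<n. x $ i * V l i) \<le> (t2 - t1) * sum_list (take l (desc (list_of_vec x)))"
      using d0 by (intro mult_left_mono) auto
    then show "sum_list (take l mu) + (t2 - t1) * sum_list (take l (desc (list_of_vec x))) \<ge> sum_list (take l nu)"
      using key[OF l] sum_list_take_nth[of l mu] sum_list_take_nth[of l nu] lmu lnu l by simp
  qed
  have P3: "\<forall>i \<in> {1..s}. mu ! (i - 1) + t2 - t1 \<ge> nu ! (i - 1)"
  proof
    fix i assume "i \<in> {1..s}"
    then have p: "i - 1 < n" using s by auto
    obtain av where "(\<forall>k<n. i - 1 < k \<longrightarrow> av k = 0) \<and> 0 < (\<Sum>k<n. (av k)\<^sup>2) \<and>
        (\<forall>m<i - 1. (\<Sum>k<n. (\<Sum>j<n. w j m * u j k) * av k) = 0)"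
      using kernel_exists[OF p, of "\<lambda>m k. \<Sum>j<n. w j m * u j k"] by blast
    then have "nu ! (i - 1) \<le> mu ! (i - 1) + (t2 - t1)"
      using T.weyl[OF p d0 x1 nus mus] by blast
    then show "mu ! (i - 1) + t2 - t1 \<ge> nu ! (i - 1)" by simp
  qed
  show ?thesis using P1 P2 P3 by blast
qed


end
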